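(* Let $\mathbb T=\mathbb R/\mathbb Z$, $Tx=2x \bmod 1$, $\mu$ Haar measure, and $d(x,y)=\min_{k\in\mathbb Z}|x-y-k|$. For $m\ge1$ let $A_m(x_1,x_2)=\frac1m\sum_{t=0}^{m-1}d(T^tx_1,T^tx_2)$. Let $\lambda_\Delta=(x\mapsto(x,x))_\#\mu$, and let $Q_m^\Delta$ and $Q_m^\otimes$ be the laws on $[0,1/2]^2$ of $(A_m(x_1,x_2),A_m(y_1,y_2))$ when $((x_1,y_1),(x_2,y_2))$ is sampled from $\lambda_\Delta^{\otimes2}$, respectively from $(\mu\otimes\mu)^{\otimes2}$. Then, with $W_1$ for the Euclidean metric on $[0,1/2]^2$, \[\frac{1}{24\sqrt2\,m}\le W_1(Q_m^\Delta,Q_m^\otimes)\le\frac{1}{\sqrt{24m}}.\] Consequently, for the full unanchored array laws with the coordinate Euclidean array metric, \[W_1\bigl(\Phi_{2,m}(\lambda_\Delta),\Phi_{2,m}(\mu\otimes\mu)\bigr)\ge\frac{1}{24\sqrt{2m}}.\]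
   Context: For $z_i=(x_i,y_i)\in\mathbb T\times\mathbb T$, $\mathcal D^X_{n,m}=(d(T^ax_i,T^bx_j))_{1\le i,j\le n,0\le a,b<m}$, $\mathcal D^Y_{n,m}=(d(T^ay_i,T^by_j))_{1\le i,j\le n,0\le a,b<m}$, and for a Borel probability measure $\lambda$ on $\mathbb T\times\mathbb T$, $\Phi_{n,m}(\lambda)=\mathrm{Law}_{\lambda^{\otimes n}}(\mathcal D^X_{n,m},\mathcal D^Y_{n,m})$. $W_1$ is the 1-Wasserstein distance. *)

theory Defs
  imports "HOL-Probability.Probability"
begin

text \<open>The circle T = R/Z is represented by representatives in [0,1);
  Haar measure is the uniform (Lebesgue) probability measure on [0,1).\<close>

definition haar :: "real measure" where
  "haar = uniform_measure lborel {0..<1}"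

definition doubling :: "real \<Rightarrow> real" where
  "doubling x = frac (2 * x)"

definition circ_dist :: "real \<Rightarrow> real \<Rightarrow> real" where
  "circ_dist x y = (INF k::int. \<bar>x - y - of_int k\<bar>)"

definition avg_dist :: "nat \<Rightarrow> real \<Rightarrow> real \<Rightarrow> real" where
  "avg_dist m x1 x2 = (1 / real m) * (\<Sum>t<m. circ_dist ((doubling ^^ t) x1) ((doubling ^^ t) x2))"

definition diag_meas :: "(real \<times> real) measure" where
  "diag_meas = distr haar borel (\<lambda>x. (x, x))"

definition Q_law :: "nat \<Rightarrow> (real \<times> real) measure \<Rightarrow> (real \<times> real) measure" where
  "Q_law m lam = distr (lam \<Otimes>\<^sub>M lam) borel
     (\<lambda>((x1, y1), (x2, y2)). (avg_dist m x1 x2, avg_dist m y1 y2))"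

definition couplings :: "'a measure \<Rightarrow> 'a measure \<Rightarrow> ('a \<times> 'a) measure set" where
  "couplings P Q = {\<pi>. sets \<pi> = sets (P \<Otimes>\<^sub>M Q) \<and> prob_space \<pi> \<and>
      distr \<pi> P fst = P \<and> distr \<pi> Q snd = Q}"

definition W1 :: "('a \<Rightarrow> 'a \<Rightarrow> real) \<Rightarrow> 'a measure \<Rightarrow> 'a measure \<Rightarrow> ennreal" where
  "W1 c P Q = (INF \<pi>\<in>couplings P Q. \<integral>\<^sup>+ z. ennreal (c (fst z) (snd z)) \<partial>\<pi>)"

type_synonym array = "nat \<times> nat \<times> nat \<times> nat \<Rightarrow> real"

definition arr_idx :: "nat \<Rightarrow> nat \<Rightarrow> (nat \<times> nat \<times> nat \<times> nat) set" where
  "arr_idx n m = {1..n} \<times> {1..n} \<times> {..<m} \<times> {..<m}"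

definition dist_array :: "nat \<Rightarrow> nat \<Rightarrow> ((real \<times> real) \<Rightarrow> real) \<Rightarrow> (nat \<Rightarrow> real \<times> real) \<Rightarrow> array" where
  "dist_array n m pr z = restrict
     (\<lambda>(i, j, a, b). circ_dist ((doubling ^^ a) (pr (z i))) ((doubling ^^ b) (pr (z j))))
     (arr_idx n m)"

definition Phi :: "nat \<Rightarrow> nat \<Rightarrow> (real \<times> real) measure \<Rightarrow> (array \<times> array) measure" where
  "Phi n m lam = distr (PiM {1..n} (\<lambda>_. lam))
     (PiM (arr_idx n m) (\<lambda>_. borel) \<Otimes>\<^sub>M PiM (arr_idx n m) (\<lambda>_. borel))
     (\<lambda>z. (dist_array n m fst z, dist_array n m snd z))"

definition array_metric :: "nat \<Rightarrow> nat \<Rightarrow> array \<times> array \<Rightarrow> array \<times> array \<Rightarrow> real" where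
  "array_metric n m D E = sqrt (\<Sum>\<iota>\<in>arr_idx n m.
      (fst D \<iota> - fst E \<iota>)\<^sup>2 + (snd D \<iota> - snd E \<iota>)\<^sup>2)"

end

theory Submission
  imports Defs
begin
definition nd :: "real \<Rightarrow> real" where "nd u = min (frac u) (1 - frac u)"

lemma nd_le: "nd u \<le> \<bar>u - of_int k\<bar>"
proof -
  have fu: "frac u = u - of_int \<lfloor>u\<rfloor>" by (simp add: frac_def)
  show ?thesis
  proof (cases "k \<le> \<lfloor>u\<rfloor>")
    case True
    then have "u - of_int k \<ge> frac u" using fu by simp
    then show ?thesis unfolding nd_def by linarith
  next
    case False
    then have "of_int k \<ge> of_int \<lfloor>u\<rfloor> + (1::real)" by simp
    then have "of_int k - u \<ge> 1 - frac u" using fu by simp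
    then show ?thesis unfolding nd_def by linarith
  qed
qed

lemma nd_attained: "\<exists>k::int. nd u = \<bar>u - of_int k\<bar>"
proof -
  have fu: "frac u = u - of_int \<lfloor>u\<rfloor>" by (simp add: frac_def)
  have "frac u \<ge> 0" "frac u < 1" by (auto simp: frac_lt_1)
  show ?thesis
  proof (cases "frac u \<le> 1 - frac u")
    case True
    then have "nd u = \<bar>u - of_int \<lfloor>u\<rfloor>\<bar>" unfolding nd_def using fu \<open>frac u \<ge> 0\<close> by simp
    then show ?thesis by blast
  next
    case False
    then have "nd u = \<bar>u - of_int (\<lfloor>u\<rfloor> + 1)\<bar>" unfolding nd_def using fu \<open>frac u < 1\<close> by simp
    then show ?thesis by blast
  qed
qed

lemma circ_dist_nd: "circ_dist x y = nd (x - y)"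
proof -
  obtain k where k: "nd (x - y) = \<bar>x - y - of_int k\<bar>" using nd_attained by blast
  show ?thesis unfolding circ_dist_def
    apply (rule cInf_eq_minimum)
    using k nd_le[of "x-y"] by auto
qed

lemma nd_lipschitz: "nd u \<le> nd v + \<bar>u - v\<bar>"
proof -
  obtain k where k: "nd v = \<bar>v - of_int k\<bar>" using nd_attained by blast
  have "nd u \<le> \<bar>u - of_int k\<bar>" by (rule nd_le)
  also have "\<dots> \<le> \<bar>v - of_int k\<bar> + \<bar>u - v\<bar>" by simp
  finally show ?thesis using k by simp
qed

lemma nd_cont: "continuous_on S nd"
proof -
  have "\<bar>nd u - nd v\<bar> \<le> \<bar>u - v\<bar>" for u v
    using nd_lipschitz[of u v] nd_lipschitz[of v u] by (simp add: abs_minus_commute)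
  then show ?thesis
    by (metis continuous_on_subset subset_UNIV lipschitz_on_continuous_on lipschitz_onI dist_real_def order.refl mult_1 zero_le_one)
qed

lemma nd_add_int: "nd (u + of_int k) = nd u"
  unfolding nd_def by (simp add: frac_def)

lemma nd_add1: "nd (u + 1) = nd u"
  using nd_add_int[of u 1] by simp

lemma nd_minus: "nd (- u) = nd u"
proof (cases "u \<in> \<int>")
  case True
  then have "frac u = 0" "frac (-u) = 0" by (simp_all add: frac_eq_0_iff)
  then show ?thesis unfolding nd_def by (simp only:)
next
  case False then show ?thesis by (simp add: nd_def frac_neg)
qed

lemma nd_half: "nd (u + 1/2) = 1/2 - nd u"
proof -
  have fu: "frac u = u - of_int \<lfloor>u\<rfloor>" by (simp add: frac_def)
  have "frac u \<ge> 0" "frac u < 1" by (auto simp: frac_lt_1)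
  show ?thesis
  proof (cases "frac u < 1/2")
    case True
    then have "\<lfloor>u + 1/2\<rfloor> = \<lfloor>u\<rfloor>" using fu of_int_floor_le[of u] unfolding floor_eq_iff by linarith
    then have "frac (u + 1/2) = frac u + 1/2" by (simp add: frac_def)
    then show ?thesis using True unfolding nd_def by auto
  next
    case False
    then have "\<lfloor>u + 1/2\<rfloor> = \<lfloor>u\<rfloor> + 1" using fu \<open>frac u < 1\<close> unfolding floor_eq_iff by simp
    then have "frac (u + 1/2) = frac u - 1/2" by (simp add: frac_def)
    then show ?thesis using False \<open>frac u < 1\<close> unfolding nd_def by auto
  qed
qed

lemma frac_diff_int: "frac (y - of_int k) = frac y"
  by (simp add: frac_def)

lemma doubling_iter: "\<exists>k::int. (doubling ^^ t) x = 2 ^ t * x - of_int k"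
proof (induction t)
  case 0 show ?case by (rule exI[of _ 0]) simp
next
  case (Suc t)
  then obtain k where k: "(doubling ^^ t) x = 2 ^ t * x - of_int k" by blast
  have "(doubling ^^ Suc t) x = frac (2 * (2 ^ t * x - of_int k))" using k by (simp add: doubling_def)
  also have "\<dots> = 2 ^ Suc t * x - of_int (2 * k + \<lfloor>2 * (2 ^ t * x - of_int k)\<rfloor>)"
    by (simp add: frac_def algebra_simps)
  finally show ?case by blast
qed

lemma d_eq: "circ_dist ((doubling ^^ t) x1) ((doubling ^^ t) x2) = nd (2 ^ t * (x1 - x2))"
proof -
  obtain k1 where k1: "(doubling ^^ t) x1 = 2 ^ t * x1 - of_int k1" using doubling_iter by blast
  obtain k2 where k2: "(doubling ^^ t) x2 = 2 ^ t * x2 - of_int k2" using doubling_iter by blast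
  have "(doubling ^^ t) x1 - (doubling ^^ t) x2 = 2 ^ t * (x1 - x2) + of_int (k2 - k1)"
    using k1 k2 by (simp add: algebra_simps)
  then show ?thesis by (simp only: circ_dist_nd nd_add_int)
qed

definition periodic :: "(real \<Rightarrow> real) \<Rightarrow> bool" where
  "periodic f \<longleftrightarrow> (\<forall>x. f (x + 1) = f x) \<and> continuous_on UNIV f"

lemma periodic_nat: "periodic f \<Longrightarrow> f (x + real n) = f x"
proof (induction n arbitrary: x)
  case 0 then show ?case by simp
next
  case (Suc n)
  have p1: "\<forall>y. f (y + 1) = f y" using Suc.prems unfolding periodic_def by blast
  have eq: "x + real (Suc n) = (x + real n) + 1" by simp
  have "f (x + real (Suc n)) = f ((x + real n) + 1)" unfolding eq ..
  also have "\<dots> = f (x + real n)" using p1 by blast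
  also have "\<dots> = f x" by (rule Suc.IH[OF Suc.prems])
  finally show ?case .
qed

lemma periodic_int: "periodic f \<Longrightarrow> f (x + of_int n) = f x"
proof (cases "n \<ge> 0")
  case True
  assume p: "periodic f"
  from True obtain k where k: "n = int k" by (metis nonneg_eq_int)
  have eq: "x + of_int n = x + real k" unfolding k by simp
  show ?thesis unfolding eq by (rule periodic_nat[OF p])
next
  case False
  assume p: "periodic f"
  from False have eq: "(x + of_int n) + real (nat (- n)) = x" by simp
  have "f ((x + of_int n) + real (nat (- n))) = f (x + of_int n)" by (rule periodic_nat[OF p])
  then show ?thesis unfolding eq by simp
qed

lemma periodic_cont: "periodic f \<Longrightarrow> continuous_on S f"
  unfolding periodic_def by (metis continuous_on_subset subset_UNIV)

definition ii :: "real \<Rightarrow> real \<Rightarrow> (real \<Rightarrow> real) \<Rightarrow> real" where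
  "ii a b f = interval_lebesgue_integral lborel (ereal a) (ereal b) f"

lemma periodic_intble: "periodic f \<Longrightarrow> a \<le> b \<Longrightarrow> interval_lebesgue_integrable lborel (ereal a) (ereal b) f"
  by (rule interval_integrable_continuous_on) (auto intro: periodic_cont)

lemma ii_sum:
  assumes "periodic f" "a \<le> b" "b \<le> c"
  shows "ii a b f + ii b c f = ii a c f"
  unfolding ii_def
  apply (rule interval_integral_sum)
  using assms periodic_intble[OF assms(1), of a c] by (simp add: min_def max_def)

lemma ii_cong: "(\<And>x. f x = g x) \<Longrightarrow> ii a b f = ii a b g"
proof -
  assume "\<And>x. f x = g x"
  then have "f = g" by (rule ext)
  then show ?thesis by simp
qed

lemma cont_shift_int:
  fixes f :: "real \<Rightarrow> real"
  assumes "continuous_on UNIV f" "a \<le> b"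
  shows "ii a b (\<lambda>x. f (x + c)) = ii (a+c) (b+c) f"
proof -
  have "(LBINT x=ereal a..ereal b. 1 *\<^sub>R f (x + c)) = (LBINT y=ereal (a + c)..ereal (b + c). f y)"
    apply (rule interval_integral_substitution_finite[where g="\<lambda>x. x + c" and g'="\<lambda>_. 1"])
    subgoal using assms(2) by simp
    subgoal by (auto intro!: derivative_eq_intros)
    subgoal by (rule continuous_on_subset[OF assms(1)]) simp
    subgoal by (rule continuous_on_const)
    done
  then show ?thesis unfolding ii_def by simp
qed

lemma cont_scale2_int:
  fixes f :: "real \<Rightarrow> real"
  assumes "continuous_on UNIV f"
  shows "2 * ii 0 1 (\<lambda>x. f (2 * x)) = ii 0 2 f"
proof -
  have "(LBINT x=ereal 0..ereal 1. 2 *\<^sub>R f (2 * x)) = (LBINT y=ereal (2*0)..ereal (2*1). f y)"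
    apply (rule interval_integral_substitution_finite[where g="\<lambda>x. 2 * x" and g'="\<lambda>_. 2"])
    subgoal by simp
    subgoal by (auto intro!: derivative_eq_intros)
    subgoal by (rule continuous_on_subset[OF assms(1)]) simp
    subgoal by (rule continuous_on_const)
    done
  then show ?thesis unfolding ii_def by simp
qed

lemma periodic_shift_int:
  assumes p: "periodic f"
  shows "ii 0 1 (\<lambda>x. f (x + c)) = ii 0 1 f"
proof -
  define r where "r = frac c"
  have r: "0 \<le> r" "r < 1" unfolding r_def by (auto simp: frac_lt_1)
  have c: "c = r + of_int \<lfloor>c\<rfloor>" unfolding r_def by (simp add: frac_def)
  have cont: "continuous_on UNIV f" using p by (simp add: periodic_def)
  have e1: "ii 0 1 (\<lambda>x. f (x + c)) = ii 0 1 (\<lambda>x. f (x + r))"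
  proof (rule ii_cong)
    fix x
    have eq: "x + c = (x + r) + of_int \<lfloor>c\<rfloor>" unfolding r_def frac_def by simp
    have "f (x + c) = f ((x + r) + of_int \<lfloor>c\<rfloor>)" by (rule arg_cong[where f=f, OF eq])
    also have "\<dots> = f (x + r)" by (rule periodic_int[OF p])
    finally show "f (x + c) = f (x + r)" .
  qed
  have e2: "ii 0 1 (\<lambda>x. f (x + r)) = ii (0+r) (1+r) f" by (rule cont_shift_int[OF cont]) simp
  have e3: "ii r (1+r) f = ii r 1 f + ii 1 (1+r) f"
    using ii_sum[OF p, of r 1 "1+r"] r by simp
  have e4: "ii 1 (1+r) f = ii 0 r (\<lambda>y. f (y + 1))"
    using cont_shift_int[OF cont, of 0 r 1] r by (simp add: add_ac)
  have e5: "ii 0 r (\<lambda>y. f (y + 1)) = ii 0 r f"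
    by (rule ii_cong) (use p in \<open>simp add: periodic_def\<close>)
  have e6: "ii 0 r f + ii r 1 f = ii 0 1 f"
    using ii_sum[OF p, of 0 r 1] r by simp
  show ?thesis using e1 e2 e3 e4 e5 e6 by simp
qed

lemma periodic_scale2_int:
  assumes p: "periodic f"
  shows "ii 0 1 (\<lambda>x. f (2 * x)) = ii 0 1 f"
proof -
  have cont: "continuous_on UNIV f" using p by (simp add: periodic_def)
  have "2 * ii 0 1 (\<lambda>x. f (2 * x)) = ii 0 2 f"
    using cont_scale2_int[OF cont] by simp
  also have "\<dots> = ii 0 1 f + ii 1 2 f"
    using ii_sum[OF p, of 0 1 2] by simp
  also have "ii 1 2 f = ii 0 1 (\<lambda>y. f (y + 1))"
    using cont_shift_int[OF cont, of 0 1 1] by simp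
  also have "\<dots> = ii 0 1 f"
    using p by (simp add: periodic_def)
  finally show ?thesis by simp
qed

lemma periodic_scale2: "periodic f \<Longrightarrow> periodic (\<lambda>x. f (2 * x))"
proof -
  assume p: "periodic f"
  have "f (2 * (x + 1)) = f (2 * x)" for x
    using periodic_nat[OF p, of "2*x" 2] by (simp add: algebra_simps)
  moreover have "continuous_on UNIV (\<lambda>x. f (2 * x))"
  proof -
    have "continuous_on UNIV (f \<circ> (\<lambda>x. 2 * x))"
      apply (rule continuous_on_compose)
      subgoal by (intro continuous_intros)
      subgoal using periodic_cont[OF p] .
      done
    then show ?thesis by (simp add: o_def)
  qed
  ultimately show ?thesis by (simp add: periodic_def)
qed

lemma periodic_scale_pow_int:
  "periodic f \<Longrightarrow> ii 0 1 (\<lambda>x. f (2 ^ t * x)) = ii 0 1 f"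
proof (induction t arbitrary: f)
  case 0 then show ?case by simp
next
  case (Suc t)
  have "ii 0 1 (\<lambda>x. f (2 ^ Suc t * x)) = ii 0 1 (\<lambda>x. (\<lambda>y. f (2 * y)) (2 ^ t * x))"
    by (simp add: algebra_simps)
  also have "\<dots> = ii 0 1 (\<lambda>x. f (2 * x))"
    using Suc.IH[OF periodic_scale2[OF Suc.prems]] .
  also have "\<dots> = ii 0 1 f" by (rule periodic_scale2_int[OF Suc.prems])
  finally show ?case .
qed


lemma ii_cong_on:
  assumes "a \<le> b" "\<And>x. a < x \<Longrightarrow> x < b \<Longrightarrow> f x = g x"
  shows "ii a b f = ii a b g"
  unfolding ii_def
  apply (rule interval_integral_cong)
  using assms by (auto simp: min_def max_def)

lemma ii_FTC:
  assumes "a \<le> b" "continuous_on {a..b} f"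
    "\<And>x. a \<le> x \<Longrightarrow> x \<le> b \<Longrightarrow> (F has_real_derivative f x) (at x within {a..b})"
  shows "ii a b f = F b - F a"
  unfolding ii_def
  apply (rule interval_integral_FTC_finite)
  using assms by (auto simp: min_def max_def has_real_derivative_iff_has_vector_derivative)

lemma ii_diff: "periodic f \<Longrightarrow> periodic g \<Longrightarrow> ii 0 1 (\<lambda>x. f x - g x) = ii 0 1 f - ii 0 1 g"
  unfolding ii_def
  by (rule interval_lebesgue_integral_diff(2)) (auto intro: periodic_intble)

lemma ii_cmult: "ii 0 1 (\<lambda>x. c * f x) = c * ii 0 1 f"
  unfolding ii_def by simp

lemma periodic_mult: "periodic f \<Longrightarrow> periodic g \<Longrightarrow> periodic (\<lambda>x. f x * g x)"
  unfolding periodic_def by (auto intro: continuous_on_mult)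

lemma periodic_const: "periodic (\<lambda>x. c)"
  unfolding periodic_def by (simp add: continuous_on_const)

lemma periodic_nd: "periodic nd"
  unfolding periodic_def using nd_add1 nd_cont by blast

lemma periodic_nd_pow: "periodic (\<lambda>x. nd (2 ^ t * x))"
proof -
  have "nd (2 ^ t * (x + 1)) = nd (2 ^ t * x)" for x
  proof -
    have eq: "2 ^ t * (x + 1) = 2 ^ t * x + of_int (2 ^ t)" by (simp add: algebra_simps)
    show ?thesis unfolding eq by (rule nd_add_int)
  qed
  moreover have "continuous_on UNIV (\<lambda>x. nd (2 ^ t * x))"
  proof -
    have "continuous_on UNIV (nd \<circ> (\<lambda>x. 2 ^ t * x))"
      apply (rule continuous_on_compose)
      subgoal by (intro continuous_intros)
      subgoal by (rule nd_cont)
      done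
    then show ?thesis by (simp add: o_def)
  qed
  ultimately show ?thesis by (simp add: periodic_def)
qed

lemma nd_low: "0 \<le> u \<Longrightarrow> u \<le> 1/2 \<Longrightarrow> nd u = u"
proof -
  assume u: "0 \<le> u" "u \<le> 1/2"
  then have "\<lfloor>u\<rfloor> = 0" by (simp add: floor_eq_iff)
  then have "frac u = u" by (simp add: frac_def)
  then show ?thesis using u by (simp add: nd_def)
qed

lemma nd_high: "1/2 \<le> u \<Longrightarrow> u < 1 \<Longrightarrow> nd u = 1 - u"
proof -
  assume u: "1/2 \<le> u" "u < 1"
  then have "\<lfloor>u\<rfloor> = 0" by (simp add: floor_eq_iff)
  then have "frac u = u" by (simp add: frac_def)
  then show ?thesis using u by (simp add: nd_def)
qed

lemma ii_nd1: "ii 0 1 nd = 1/4"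
proof -
  have a: "ii 0 (1/2) nd = ii 0 (1/2) (\<lambda>x. x)"
    by (rule ii_cong_on) (auto intro: nd_low)
  have b: "ii (1/2) 1 nd = ii (1/2) 1 (\<lambda>x. 1 - x)"
    by (rule ii_cong_on) (auto intro: nd_high)
  have c: "ii 0 (1/2) (\<lambda>x. x) = (1/2)^2/2 - 0^2/2"
    by (rule ii_FTC) (auto intro!: derivative_eq_intros continuous_intros)
  have d: "ii (1/2) 1 (\<lambda>x. 1 - x) = (1 - 1^2/2) - (1/2 - (1/2)^2/2)"
    by (rule ii_FTC[where F="\<lambda>x. x - x^2/2"]) (auto intro!: derivative_eq_intros continuous_intros)
  have "ii 0 1 nd = ii 0 (1/2) nd + ii (1/2) 1 nd"
    using ii_sum[OF periodic_nd, of 0 "1/2" 1] by simp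
  then show ?thesis using a b c d by (simp add: power2_eq_square)
qed

lemma ii_nd2: "ii 0 1 (\<lambda>x. nd x * nd x) = 1/12"
proof -
  have a: "ii 0 (1/2) (\<lambda>x. nd x * nd x) = ii 0 (1/2) (\<lambda>x. x * x)"
    by (rule ii_cong_on) (auto simp: nd_low)
  have b: "ii (1/2) 1 (\<lambda>x. nd x * nd x) = ii (1/2) 1 (\<lambda>x. (1 - x) * (1 - x))"
    by (rule ii_cong_on) (auto simp: nd_high)
  have c: "ii 0 (1/2) (\<lambda>x. x * x) = (1/2)^3/3 - 0^3/3"
    by (rule ii_FTC[where F="\<lambda>x. x^3/3"]) (auto intro!: derivative_eq_intros continuous_intros simp: power2_eq_square)
  have d: "ii (1/2) 1 (\<lambda>x. (1 - x) * (1 - x)) = (1 - 1)^3/3 - (1/2 - 1)^3/3"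
    by (rule ii_FTC[where F="\<lambda>x. (x - 1)^3/3"]) (auto intro!: derivative_eq_intros continuous_intros simp: power2_eq_square field_simps)
  have "ii 0 1 (\<lambda>x. nd x * nd x) = ii 0 (1/2) (\<lambda>x. nd x * nd x) + ii (1/2) 1 (\<lambda>x. nd x * nd x)"
    using ii_sum[OF periodic_mult[OF periodic_nd periodic_nd], of 0 "1/2" 1] by simp
  then show ?thesis using a b c d by (simp add: power3_eq_cube)
qed

lemma ii_ndt1: "ii 0 1 (\<lambda>x. nd (2 ^ t * x)) = 1/4"
  using periodic_scale_pow_int[OF periodic_nd, of t] ii_nd1 by simp

lemma ii_ndt2: "ii 0 1 (\<lambda>x. nd (2 ^ t * x) * nd (2 ^ t * x)) = 1/12"
  using periodic_scale_pow_int[OF periodic_mult[OF periodic_nd periodic_nd], of t] ii_nd2 by simp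

lemma ii_cross:
  assumes "s < t"
  shows "ii 0 1 (\<lambda>x. nd (2 ^ s * x) * nd (2 ^ t * x)) = 1/16"
proof -
  define c :: real where "c = 1 / 2 ^ (Suc s)"
  define G where "G = (\<lambda>x. nd (2 ^ s * x) * nd (2 ^ t * x))"
  have pG: "periodic G" unfolding G_def by (intro periodic_mult periodic_nd_pow)
  have shiftG: "G (x + c) = (1/2) * nd (2 ^ t * x) - G x" for x
  proof -
    have e1: "2 ^ s * (x + c) = 2 ^ s * x + 1/2" unfolding c_def by (simp add: field_simps)
    obtain k where k: "t = Suc s + k" using assms by (metis less_iff_Suc_add add_Suc)
    have e2: "2 ^ t * (x + c) = 2 ^ t * x + of_int (2 ^ k)"
      unfolding c_def k by (simp add: field_simps power_add)
    show ?thesis unfolding G_def e1 e2 nd_half nd_add_int by (simp add: algebra_simps)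
  qed
  have "ii 0 1 G = ii 0 1 (\<lambda>x. G (x + c))" using periodic_shift_int[OF pG] by simp
  also have "\<dots> = ii 0 1 (\<lambda>x. (1/2) * nd (2 ^ t * x) - G x)" by (rule ii_cong) (rule shiftG)
  also have "\<dots> = ii 0 1 (\<lambda>x. (1/2) * nd (2 ^ t * x)) - ii 0 1 G"
    by (rule ii_diff) (intro periodic_mult periodic_const periodic_nd_pow pG)+
  also have "\<dots> = 1/8 - ii 0 1 G" using ii_cmult[of "1/2" "\<lambda>x. nd (2 ^ t * x)"] ii_ndt1[of t] by simp
  finally have "ii 0 1 G = 1/16" by simp
  then show ?thesis unfolding G_def .
qed

lemma emeasure_Ico01: "emeasure lborel {0::real..<1} = 1" by simp

lemma prob_haar: "prob_space haar"
  unfolding haar_def by (rule prob_space_uniform_measure) simp_all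

lemma sets_haar[simp, measurable_cong]: "sets haar = sets borel"
  unfolding haar_def by simp

lemma space_haar[simp]: "space haar = UNIV"
  unfolding haar_def by simp

lemma haar_density: "haar = density lborel (\<lambda>x. ennreal (indicator {0..<1} x))"
proof -
  have "(\<lambda>x. indicator {0::real..<1} x / (1::ennreal)) = (\<lambda>x. ennreal (indicator {0..<1} x))"
    by (rule ext) (simp add: divide_ennreal_def ennreal_indicator)
  then show ?thesis unfolding haar_def uniform_measure_def emeasure_Ico01 by simp
qed

lemma integral_haar:
  assumes "continuous_on UNIV f"
  shows "integral\<^sup>L haar f = ii 0 1 f"
proof -
  have fm: "f \<in> borel_measurable borel" by (rule borel_measurable_continuous_onI[OF assms])
  have "integral\<^sup>L haar f = integral\<^sup>L lborel (\<lambda>x. indicator {0..<1} x *\<^sub>R f x)"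
    unfolding haar_density
    by (rule integral_density) (use fm in auto)
  also have "\<dots> = set_lebesgue_integral lborel {0..<1} f"
    by (simp add: set_lebesgue_integral_def)
  also have "\<dots> = set_lebesgue_integral lborel {0<..<1} f"
    by (rule set_integral_discrete_difference[where X="{0}"]) auto
  also have "\<dots> = ii 0 1 f"
    unfolding ii_def interval_lebesgue_integral_def by simp
  finally show ?thesis .
qed

lemma integral_haar_shift:
  assumes "periodic F"
  shows "integral\<^sup>L haar (\<lambda>x. F (x + c)) = ii 0 1 F"
proof -
  have "continuous_on UNIV (\<lambda>x. F (x + c))"
  proof -
    have "continuous_on UNIV (F \<circ> (\<lambda>x. x + c))"
      apply (rule continuous_on_compose)
      subgoal by (intro continuous_intros)
      subgoal by (rule periodic_cont[OF assms])
      done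
    then show ?thesis by (simp add: o_def)
  qed
  then have "integral\<^sup>L haar (\<lambda>x. F (x + c)) = ii 0 1 (\<lambda>x. F (x + c))" by (rule integral_haar)
  also have "\<dots> = ii 0 1 F" by (rule periodic_shift_int[OF assms])
  finally show ?thesis .
qed

lemma nd_nonneg: "0 \<le> nd u"
  unfolding nd_def using frac_lt_1[of u] frac_ge_0[of u] by simp

lemma nd_le_half: "nd u \<le> 1/2"
  unfolding nd_def by (simp add: min_def)

lemma nd_meas[measurable]: "nd \<in> borel_measurable borel"
  by (rule borel_measurable_continuous_onI[OF nd_cont])

lemma kernel1: "integral\<^sup>L haar (\<lambda>x2. nd (2 ^ t * (x1 - x2))) = 1/4"
proof -
  have e: "nd (2 ^ k * (x1 - x2)) = nd (2 ^ k * (x2 + (- x1)))" for k x2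
    by (metis nd_minus minus_diff_eq mult_minus_right diff_conv_add_uminus)
  have "integral\<^sup>L haar (\<lambda>x2. nd (2 ^ t * (x1 - x2))) = integral\<^sup>L haar (\<lambda>x2. nd (2 ^ t * (x2 + (- x1))))"
    by (simp only: e)
  also have "\<dots> = ii 0 1 (\<lambda>x. nd (2 ^ t * x))"
    by (rule integral_haar_shift[OF periodic_nd_pow])
  finally show ?thesis using ii_ndt1 by simp
qed

lemma kernel2: "integral\<^sup>L haar (\<lambda>x2. nd (2 ^ s * (x1 - x2)) * nd (2 ^ t * (x1 - x2)))
   = 1/16 + (if s = t then 1/48 else 0)"
proof -
  have e: "nd (2 ^ k * (x1 - x2)) = nd (2 ^ k * (x2 + (- x1)))" for k x2
    by (metis nd_minus minus_diff_eq right_diff_distrib' mult_minus_right diff_conv_add_uminus)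
  have "integral\<^sup>L haar (\<lambda>x2. nd (2 ^ s * (x1 - x2)) * nd (2 ^ t * (x1 - x2)))
     = integral\<^sup>L haar (\<lambda>x2. nd (2 ^ s * (x2 + (- x1))) * nd (2 ^ t * (x2 + (- x1))))"
    by (simp only: e)
  also have "\<dots> = ii 0 1 (\<lambda>u. nd (2 ^ s * u) * nd (2 ^ t * u))"
    by (rule integral_haar_shift[OF periodic_mult[OF periodic_nd_pow periodic_nd_pow]])
  finally have i: "integral\<^sup>L haar (\<lambda>x2. nd (2 ^ s * (x1 - x2)) * nd (2 ^ t * (x1 - x2)))
      = ii 0 1 (\<lambda>u. nd (2 ^ s * u) * nd (2 ^ t * u))" .
  consider "s = t" | "s < t" | "t < s" by linarith
  then show ?thesis
  proof cases
    case 1 then show ?thesis using i ii_ndt2[of t] by simp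
  next
    case 2 then show ?thesis using i ii_cross[of s t] by simp
  next
    case 3
    have "ii 0 1 (\<lambda>u. nd (2 ^ s * u) * nd (2 ^ t * u)) = ii 0 1 (\<lambda>u. nd (2 ^ t * u) * nd (2 ^ s * u))"
      by (rule ii_cong) simp
    then show ?thesis using 3 i ii_cross[of t s] by simp
  qed
qed

lemma bounded_intble:
  assumes "prob_space M" "f \<in> borel_measurable M" "\<And>x. \<bar>f x\<bar> \<le> (B::real)"
  shows "integrable M f"
proof -
  interpret prob_space M by fact
  show ?thesis by (rule integrable_const_bound[where B=B]) (use assms in auto)
qed

lemma sq_diff_prod:
  fixes a b :: "'a \<Rightarrow> real"
  assumes M: "prob_space M" and N: "prob_space N"
    and am[measurable]: "a \<in> borel_measurable M" and bm[measurable]: "b \<in> borel_measurable N"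
    and ab: "\<And>x. \<bar>a x\<bar> \<le> B" and bb: "\<And>x. \<bar>b x\<bar> \<le> B"
  shows "integral\<^sup>L (M \<Otimes>\<^sub>M N) (\<lambda>z. (a (fst z) - b (snd z))\<^sup>2)
       = integral\<^sup>L M (\<lambda>x. (a x)\<^sup>2) - 2 * integral\<^sup>L M a * integral\<^sup>L N b + integral\<^sup>L N (\<lambda>y. (b y)\<^sup>2)"
proof -
  interpret pair_prob_space M N using M N by (simp add: pair_prob_space_def pair_sigma_finite_def prob_space_imp_sigma_finite)
  have B0: "0 \<le> B" using ab[of undefined] by simp
  have a2: "\<bar>(a x)\<^sup>2\<bar> \<le> B * B" for x
  proof -
    have "\<bar>a x\<bar> * \<bar>a x\<bar> \<le> B * B" by (rule mult_mono) (use ab[of x] B0 in auto)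
    then show ?thesis by (simp add: power2_eq_square abs_mult)
  qed
  have b2: "\<bar>(b x)\<^sup>2\<bar> \<le> B * B" for x
  proof -
    have "\<bar>b x\<bar> * \<bar>b x\<bar> \<le> B * B" by (rule mult_mono) (use bb[of x] B0 in auto)
    then show ?thesis by (simp add: power2_eq_square abs_mult)
  qed
  have iA[simp]: "integrable M a" by (rule bounded_intble[OF M am ab])
  have iA2[simp]: "integrable M (\<lambda>x. (a x)\<^sup>2)" by (rule bounded_intble[OF M _ a2]) simp
  have iB[simp]: "integrable N b" by (rule bounded_intble[OF N bm bb])
  have iB2[simp]: "integrable N (\<lambda>x. (b x)\<^sup>2)" by (rule bounded_intble[OF N _ b2]) simp
  have d: "\<bar>(a (fst z) - b (snd z))\<^sup>2\<bar> \<le> (2*B) * (2*B)" for z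
  proof -
    have h: "\<bar>a (fst z) - b (snd z)\<bar> \<le> 2 * B" using ab[of "fst z"] bb[of "snd z"] by linarith
    have "\<bar>a (fst z) - b (snd z)\<bar> * \<bar>a (fst z) - b (snd z)\<bar> \<le> (2*B) * (2*B)" by (rule mult_mono) (use h B0 in auto)
    then show ?thesis by (simp add: power2_eq_square abs_mult)
  qed
  have iD: "integrable (M \<Otimes>\<^sub>M N) (\<lambda>z. (a (fst z) - b (snd z))\<^sup>2)"
    by (rule bounded_intble[OF P.prob_space_axioms _ d]) simp
  have inner: "integral\<^sup>L N (\<lambda>y. (a x - b y)\<^sup>2) = (a x)\<^sup>2 - 2 * a x * integral\<^sup>L N b + integral\<^sup>L N (\<lambda>y. (b y)\<^sup>2)" for x
  proof -
    have "(\<lambda>y. (a x - b y)\<^sup>2) = (\<lambda>y. ((a x)\<^sup>2 - 2 * a x * b y) + (b y)\<^sup>2)"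
      by (rule ext) (simp add: power2_eq_square algebra_simps)
    then have "integral\<^sup>L N (\<lambda>y. (a x - b y)\<^sup>2) = integral\<^sup>L N (\<lambda>y. (a x)\<^sup>2 - 2 * a x * b y) + integral\<^sup>L N (\<lambda>y. (b y)\<^sup>2)"
      by (simp add: integral_add)
    also have "integral\<^sup>L N (\<lambda>y. (a x)\<^sup>2 - 2 * a x * b y) = (a x)\<^sup>2 - 2 * a x * integral\<^sup>L N b"
      by (simp add: integral_diff prob_space.prob_space[OF N])
    finally show ?thesis .
  qed
  have "integral\<^sup>L (M \<Otimes>\<^sub>M N) (\<lambda>z. (a (fst z) - b (snd z))\<^sup>2)
      = integral\<^sup>L M (\<lambda>x. integral\<^sup>L N (\<lambda>y. (a x - b y)\<^sup>2))"
    using integral_fst'[OF iD] by simp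
  also have "\<dots> = integral\<^sup>L M (\<lambda>x. ((a x)\<^sup>2 - (2 * integral\<^sup>L N b) * a x) + integral\<^sup>L N (\<lambda>y. (b y)\<^sup>2))"
    by (simp only: inner) (simp add: algebra_simps)
  also have "\<dots> = integral\<^sup>L M (\<lambda>x. (a x)\<^sup>2 - (2 * integral\<^sup>L N b) * a x) + integral\<^sup>L N (\<lambda>y. (b y)\<^sup>2)"
    by (simp add: integral_add prob_space.prob_space[OF M])
  also have "integral\<^sup>L M (\<lambda>x. (a x)\<^sup>2 - (2 * integral\<^sup>L N b) * a x) = integral\<^sup>L M (\<lambda>x. (a x)\<^sup>2) - (2 * integral\<^sup>L N b) * integral\<^sup>L M a"
    by (simp add: integral_diff)
  finally show ?thesis by (simp add: algebra_simps)
qed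

definition avgc :: "nat \<Rightarrow> real \<Rightarrow> real" where
  "avgc m u = (1 / real m) * (\<Sum>t<m. nd (2 ^ t * u))"

lemma avg_eq: "avg_dist m x1 x2 = avgc m (x1 - x2)"
  unfolding avg_dist_def avgc_def d_eq ..

lemma avgc_meas[measurable]: "avgc m \<in> borel_measurable borel"
  unfolding avgc_def by measurable

lemma avgc_nonneg: "0 \<le> avgc m u"
  unfolding avgc_def by (simp add: sum_nonneg nd_nonneg)

lemma avgc_le: "avgc m u \<le> 1/2"
proof (cases "m = 0")
  case True then show ?thesis by (simp add: avgc_def)
next
  case False
  have "(\<Sum>t<m. nd (2 ^ t * u)) \<le> (\<Sum>t<m. 1/2)" by (rule sum_mono) (rule nd_le_half)
  then have "(\<Sum>t<m. nd (2 ^ t * u)) \<le> real m / 2" by simp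
  then show ?thesis using False unfolding avgc_def by (simp add: field_simps)
qed

lemma avgc_abs: "\<bar>avgc m u\<bar> \<le> 1/2"
  using avgc_nonneg[of m u] avgc_le[of m u] by (simp add: abs_of_nonneg)

lemma nd_abs: "\<bar>nd u\<bar> \<le> 1/2"
  using nd_nonneg[of u] nd_le_half[of u] by (simp add: abs_of_nonneg)

lemma nd_shift_intble: "integrable haar (\<lambda>x2. nd (2 ^ t * (x1 - x2)))"
proof (rule bounded_intble[OF prob_haar, where B="1/2"])
  fix x show "\<bar>nd (2 ^ t * (x1 - x))\<bar> \<le> 1/2" by (rule nd_abs)
qed simp

lemma nd_shift2_intble: "integrable haar (\<lambda>x2. nd (2 ^ s * (x1 - x2)) * nd (2 ^ t * (x1 - x2)))"
proof (rule bounded_intble[OF prob_haar, where B="1"])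
  fix x
  have "\<bar>nd (2 ^ s * (x1 - x)) * nd (2 ^ t * (x1 - x))\<bar> \<le> 1 * 1"
    unfolding abs_mult
    by (rule mult_mono) (use nd_abs[of "2 ^ s * (x1 - x)"] nd_abs[of "2 ^ t * (x1 - x)"] in auto)
  then show "\<bar>nd (2 ^ s * (x1 - x)) * nd (2 ^ t * (x1 - x))\<bar> \<le> 1" by simp
qed simp

lemma E1: "m \<ge> 1 \<Longrightarrow> integral\<^sup>L haar (\<lambda>x2. avgc m (x1 - x2)) = 1/4"
  unfolding avgc_def
  by (simp add: integral_sum nd_shift_intble kernel1)

lemma E2: "m \<ge> 1 \<Longrightarrow> integral\<^sup>L haar (\<lambda>x2. (avgc m (x1 - x2))\<^sup>2) = 1/16 + 1/(48 * real m)"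
proof -
  assume m: "m \<ge> 1"
  have eq: "(avgc m (x1 - x2))\<^sup>2 = (1 / real m)^2 * (\<Sum>s<m. \<Sum>t<m. nd (2 ^ s * (x1 - x2)) * nd (2 ^ t * (x1 - x2)))" for x2
    unfolding avgc_def power_mult_distrib power2_eq_square by (simp add: sum_product)
  have "integral\<^sup>L haar (\<lambda>x2. (avgc m (x1 - x2))\<^sup>2)
     = (1 / real m)^2 * (\<Sum>s<m. \<Sum>t<m. integral\<^sup>L haar (\<lambda>x2. nd (2 ^ s * (x1 - x2)) * nd (2 ^ t * (x1 - x2))))"
    unfolding eq by (simp add: integral_sum nd_shift2_intble)
  also have "\<dots> = (1 / real m)^2 * (\<Sum>s<m. \<Sum>t<m. 1/16 + (if s = t then 1/48 else 0))"
    by (simp only: kernel2)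
  also have "(\<Sum>s<m. \<Sum>t<m. 1/16 + (if s = t then (1::real)/48 else 0)) = real m * real m / 16 + real m / 48"
    by (simp add: sum.distrib algebra_simps)
  finally have X: "integral\<^sup>L haar (\<lambda>x2. (avgc m (x1 - x2))\<^sup>2) = (1 / real m)^2 * (real m * real m / 16 + real m / 48)" .
  have m0: "real m > 0" using m by simp
  have "(1 / real m)^2 * (real m * real m / 16 + real m / 48) = 1/16 + 1/(48 * real m)"
    using m0 by (simp add: field_simps power2_eq_square)
  then show ?thesis using X by simp
qed

abbreviation "HH \<equiv> haar \<Otimes>\<^sub>M haar"
abbreviation "OM \<equiv> HH \<Otimes>\<^sub>M HH"

definition Dw :: "nat \<Rightarrow> (real \<times> real) \<times> (real \<times> real) \<Rightarrow> real" where
  "Dw m w = avgc m (fst (fst w) - fst (snd w)) - avgc m (snd (fst w) - snd (snd w))"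

lemma prob_HH: "prob_space HH"
  by (intro prob_space_pair prob_haar)

lemma prob_OM: "prob_space OM"
  by (intro prob_space_pair prob_HH)

lemma Dw_meas[measurable]: "Dw m \<in> borel_measurable OM"
  unfolding Dw_def by measurable

lemma Dw_abs: "\<bar>Dw m w\<bar> \<le> 1/2"
  unfolding Dw_def using avgc_nonneg avgc_le
  by (smt (verit) avgc_le avgc_nonneg)

lemma Dw_sq_bound: "\<bar>(Dw m w)\<^sup>2\<bar> \<le> 1"
proof -
  have "\<bar>Dw m w\<bar> * \<bar>Dw m w\<bar> \<le> 1 * 1" by (rule mult_mono) (use Dw_abs[of m w] in auto)
  then show ?thesis by (simp add: power2_eq_square abs_mult)
qed

lemma Dw_sq_int: "m \<ge> 1 \<Longrightarrow> integral\<^sup>L OM (\<lambda>w. (Dw m w)\<^sup>2) = 1 / (24 * real m)"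
proof -
  assume m: "m \<ge> 1"
  interpret pair_prob_space HH HH
    by (simp add: pair_prob_space_def pair_sigma_finite_def prob_HH prob_space_imp_sigma_finite)
  have iD: "integrable OM (\<lambda>w. (Dw m w)\<^sup>2)"
    by (rule bounded_intble[OF prob_OM _ Dw_sq_bound]) simp
  have inner: "integral\<^sup>L HH (\<lambda>q. (Dw m (p, q))\<^sup>2) = 1 / (24 * real m)" for p
  proof -
    have "integral\<^sup>L HH (\<lambda>q. (Dw m (p, q))\<^sup>2)
        = integral\<^sup>L HH (\<lambda>z. ((\<lambda>x2. avgc m (fst p - x2)) (fst z) - (\<lambda>y2. avgc m (snd p - y2)) (snd z))\<^sup>2)"
      unfolding Dw_def by simp
    also have "\<dots> = integral\<^sup>L haar (\<lambda>x. ((\<lambda>x2. avgc m (fst p - x2)) x)\<^sup>2)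
        - 2 * integral\<^sup>L haar (\<lambda>x2. avgc m (fst p - x2)) * integral\<^sup>L haar (\<lambda>y2. avgc m (snd p - y2))
        + integral\<^sup>L haar (\<lambda>y. ((\<lambda>y2. avgc m (snd p - y2)) y)\<^sup>2)"
      by (rule sq_diff_prod[OF prob_haar prob_haar _ _ avgc_abs avgc_abs]) simp_all
    also have "\<dots> = (1/16 + 1/(48 * real m)) - 2 * (1/4) * (1/4) + (1/16 + 1/(48 * real m))"
      by (simp only: E1[OF m] E2[OF m])
    also have "\<dots> = 1 / (24 * real m)" by (simp add: field_simps)
    finally show ?thesis .
  qed
  have "integral\<^sup>L OM (\<lambda>w. (Dw m w)\<^sup>2) = integral\<^sup>L HH (\<lambda>p. integral\<^sup>L HH (\<lambda>q. (Dw m (p, q))\<^sup>2))"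
    using integral_fst'[OF iD] by simp
  also have "\<dots> = integral\<^sup>L HH (\<lambda>p. 1 / (24 * real m))" by (simp only: inner)
  also have "\<dots> = 1 / (24 * real m)" using prob_space.prob_space[OF prob_HH] by simp
  finally show ?thesis .
qed

lemma Dw_abs_int: "integrable OM (\<lambda>w. \<bar>Dw m w\<bar>)"
proof (rule bounded_intble[OF prob_OM, where B="1/2"])
  fix x show "\<bar>\<bar>Dw m x\<bar>\<bar> \<le> 1/2" using Dw_abs[of m x] by simp
qed simp

lemma Dw_lower: "m \<ge> 1 \<Longrightarrow> integral\<^sup>L OM (\<lambda>w. \<bar>Dw m w\<bar>) \<ge> 1 / (12 * real m)"
proof -
  assume m: "m \<ge> 1"
  have le: "2 * (Dw m w)\<^sup>2 \<le> \<bar>Dw m w\<bar>" for w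
  proof -
    have "\<bar>Dw m w\<bar> * \<bar>Dw m w\<bar> \<le> \<bar>Dw m w\<bar> * (1/2)" by (rule mult_left_mono) (use Dw_abs[of m w] in auto)
    then show ?thesis by (simp add: power2_eq_square abs_mult)
  qed
  have iD: "integrable OM (\<lambda>w. (Dw m w)\<^sup>2)"
    by (rule bounded_intble[OF prob_OM _ Dw_sq_bound]) simp
  have "integral\<^sup>L OM (\<lambda>w. 2 * (Dw m w)\<^sup>2) \<le> integral\<^sup>L OM (\<lambda>w. \<bar>Dw m w\<bar>)"
    by (rule integral_mono) (use iD Dw_abs_int le in auto)
  then show ?thesis using Dw_sq_int[OF m] by (simp add: field_simps)
qed

lemma Dw_upper: "m \<ge> 1 \<Longrightarrow> integral\<^sup>L OM (\<lambda>w. \<bar>Dw m w\<bar>) \<le> 1 / sqrt (24 * real m)"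
proof -
  assume m: "m \<ge> 1"
  interpret prob_space OM by (rule prob_OM)
  have iD0: "integrable OM (\<lambda>w. (Dw m w)\<^sup>2)"
    by (rule bounded_intble[OF prob_OM _ Dw_sq_bound]) simp
  have iD: "integrable OM (\<lambda>w. (\<bar>Dw m w\<bar>)\<^sup>2)" using iD0 by simp
  have "0 \<le> variance (\<lambda>w. \<bar>Dw m w\<bar>)" by (rule variance_positive)
  also have "variance (\<lambda>w. \<bar>Dw m w\<bar>) = expectation (\<lambda>w. (\<bar>Dw m w\<bar>)\<^sup>2) - (expectation (\<lambda>w. \<bar>Dw m w\<bar>))\<^sup>2"
    by (rule variance_eq[OF Dw_abs_int iD])
  finally have "(expectation (\<lambda>w. \<bar>Dw m w\<bar>))\<^sup>2 \<le> 1 / (24 * real m)"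
    using Dw_sq_int[OF m] by simp
  moreover have "0 \<le> expectation (\<lambda>w. \<bar>Dw m w\<bar>)" by (rule integral_nonneg_AE) simp
  ultimately show ?thesis
    by (metis real_sqrt_divide real_sqrt_le_mono real_sqrt_one real_sqrt_unique)
qed

definition ax :: "nat \<Rightarrow> (real \<times> real) \<times> (real \<times> real) \<Rightarrow> real" where
  "ax m w = avgc m (fst (fst w) - fst (snd w))"
definition ay :: "nat \<Rightarrow> (real \<times> real) \<times> (real \<times> real) \<Rightarrow> real" where
  "ay m w = avgc m (snd (fst w) - snd (snd w))"

lemma ax_meas[measurable]: "ax m \<in> borel_measurable OM" unfolding ax_def by measurable
lemma ay_meas[measurable]: "ay m \<in> borel_measurable OM" unfolding ay_def by measurable

lemma Dw_axay: "Dw m w = ax m w - ay m w"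
  unfolding Dw_def ax_def ay_def ..

lemma sets_Q_law[simp, measurable_cong]: "sets (Q_law m lam) = sets borel"
  unfolding Q_law_def by simp

lemma space_Q_law[simp]: "space (Q_law m lam) = UNIV"
  using sets_eq_imp_space_eq[OF sets_Q_law] by simp

lemma diag_prob: "prob_space diag_meas"
  unfolding diag_meas_def by (rule prob_space.prob_space_distr[OF prob_haar]) simp

lemma sets_diag[simp, measurable_cong]: "sets diag_meas = sets borel"
  unfolding diag_meas_def by simp

lemma Qp_eq: "Q_law m (haar \<Otimes>\<^sub>M haar) = distr OM borel (\<lambda>w. (ax m w, ay m w))"
  unfolding Q_law_def
  by (rule distr_cong) (auto simp: ax_def ay_def avg_eq split: prod.splits)

lemma diag_pair: "diag_meas \<Otimes>\<^sub>M diag_meas = distr HH (borel \<Otimes>\<^sub>M borel) (\<lambda>(x, y). ((x, x), (y, y)))"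
  unfolding diag_meas_def
  by (rule pair_measure_distr) (simp_all add: prob_space_imp_sigma_finite diag_prob[unfolded diag_meas_def])

lemma OM_fst: "distr OM HH (\<lambda>(p, q). (fst p, fst q)) = HH"
proof -
  have "distr HH haar fst \<Otimes>\<^sub>M distr HH haar fst = distr OM (haar \<Otimes>\<^sub>M haar) (\<lambda>(p, q). (fst p, fst q))"
    by (rule pair_measure_distr) (simp_all add: prob_space_imp_sigma_finite prob_haar prob_space.distr_pair_fst)
  moreover have "distr HH haar fst = haar" by (rule prob_space.distr_pair_fst[OF prob_haar])
  ultimately show ?thesis by simp
qed

lemma Qmap_meas[measurable]: "(\<lambda>((x1, y1), (x2, y2)). (avg_dist m x1 x2, avg_dist m y1 y2)) \<in> measurable (borel \<Otimes>\<^sub>M borel) (borel :: (real \<times> real) measure)"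
  unfolding avg_eq case_prod_unfold borel_prod[symmetric] by measurable

lemma Qd_eq: "Q_law m diag_meas = distr OM borel (\<lambda>w. (ax m w, ax m w))"
proof -
  have "Q_law m diag_meas = distr (distr HH (borel \<Otimes>\<^sub>M borel) (\<lambda>(x, y). ((x, x), (y, y)))) borel
      (\<lambda>((x1, y1), (x2, y2)). (avg_dist m x1 x2, avg_dist m y1 y2))"
    unfolding Q_law_def diag_pair ..
  also have "\<dots> = distr HH borel ((\<lambda>((x1, y1), (x2, y2)). (avg_dist m x1 x2, avg_dist m y1 y2)) \<circ> (\<lambda>(x, y). ((x, x), (y, y))))"
    by (rule distr_distr) simp_all
  also have "\<dots> = distr HH borel (\<lambda>p. (avgc m (fst p - snd p), avgc m (fst p - snd p)))"
    by (rule distr_cong) (auto simp: avg_eq)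
  also have "\<dots> = distr (distr OM HH (\<lambda>(p, q). (fst p, fst q))) borel (\<lambda>p. (avgc m (fst p - snd p), avgc m (fst p - snd p)))"
    unfolding OM_fst ..
  also have "\<dots> = distr OM borel ((\<lambda>p. (avgc m (fst p - snd p), avgc m (fst p - snd p))) \<circ> (\<lambda>(p, q). (fst p, fst q)))"
    by (rule distr_distr) simp_all
  also have "\<dots> = distr OM borel (\<lambda>w. (ax m w, ax m w))"
    by (rule distr_cong) (auto simp: ax_def)
  finally show ?thesis .
qed

lemma dist_diag_lower:
  fixes a b c :: real
  shows "\<bar>b - c\<bar> / sqrt 2 \<le> dist (a, a) (b, c)"
proof -
  have "(b - c)\<^sup>2 / 2 \<le> (a - b)\<^sup>2 + (a - c)\<^sup>2"
  proof -
    have "0 \<le> (2 * a - b - c)\<^sup>2" by simp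
    moreover have "2 * ((a - b)\<^sup>2 + (a - c)\<^sup>2) = (b - c)\<^sup>2 + (2 * a - b - c)\<^sup>2"
      by (simp add: power2_eq_square algebra_simps)
    ultimately have "(b - c)\<^sup>2 \<le> 2 * ((a - b)\<^sup>2 + (a - c)\<^sup>2)" by linarith
    then show ?thesis by simp
  qed
  then have "sqrt ((b - c)\<^sup>2 / 2) \<le> sqrt ((a - b)\<^sup>2 + (a - c)\<^sup>2)" by (rule real_sqrt_le_mono)
  moreover have "sqrt ((b - c)\<^sup>2 / 2) = \<bar>b - c\<bar> / sqrt 2" by (simp add: real_sqrt_divide)
  moreover have "dist (a, a) (b, c) = sqrt ((a - b)\<^sup>2 + (a - c)\<^sup>2)" by (simp add: dist_Pair_Pair dist_real_def)
  ultimately show ?thesis by simp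
qed

lemma dist_diag_eq:
  fixes a b :: real
  shows "dist (a, a) (a, b) = \<bar>a - b\<bar>"
  by (simp add: dist_Pair_Pair dist_real_def)

lemma Fmap_meas[measurable]: "(\<lambda>w. ((ax m w, ax m w), (ax m w, ay m w))) \<in> measurable OM (borel \<Otimes>\<^sub>M (borel :: (real \<times> real) measure))"
  by measurable

lemma sets_QQ: "sets (Q_law m lam \<Otimes>\<^sub>M Q_law m lam') = sets (borel \<Otimes>\<^sub>M (borel :: (real \<times> real) measure))"
  by (rule sets_pair_measure_cong) simp_all

lemma W1_Q_upper:
  assumes m: "m \<ge> 1"
  shows "W1 dist (Q_law m diag_meas) (Q_law m (haar \<Otimes>\<^sub>M haar)) \<le> ennreal (1 / sqrt (24 * real m))"
proof -
  define F where "F = (\<lambda>w. ((ax m w, ax m w), (ax m w, ay m w)))"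
  define \<pi> where "\<pi> = distr OM (borel \<Otimes>\<^sub>M (borel :: (real \<times> real) measure)) F"
  have Fm: "F \<in> measurable OM (borel \<Otimes>\<^sub>M borel)" unfolding F_def by (rule Fmap_meas)
  have c: "\<pi> \<in> couplings (Q_law m diag_meas) (Q_law m (haar \<Otimes>\<^sub>M haar))"
    unfolding couplings_def
  proof (intro CollectI conjI)
    show "sets \<pi> = sets (Q_law m diag_meas \<Otimes>\<^sub>M Q_law m (haar \<Otimes>\<^sub>M haar))"
      unfolding \<pi>_def sets_QQ by simp
    show "prob_space \<pi>" unfolding \<pi>_def by (rule prob_space.prob_space_distr[OF prob_OM Fm])
    have "distr \<pi> (Q_law m diag_meas) fst = distr \<pi> borel fst"
      by (rule distr_cong) simp_all
    also have "\<dots> = distr OM borel (fst \<circ> F)"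
      unfolding \<pi>_def by (rule distr_distr[OF _ Fm]) simp
    also have "\<dots> = Q_law m diag_meas"
      unfolding Qd_eq F_def by (simp add: o_def)
    finally show "distr \<pi> (Q_law m diag_meas) fst = Q_law m diag_meas" .
    have "distr \<pi> (Q_law m (haar \<Otimes>\<^sub>M haar)) snd = distr \<pi> borel snd"
      by (rule distr_cong) simp_all
    also have "\<dots> = distr OM borel (snd \<circ> F)"
      unfolding \<pi>_def by (rule distr_distr[OF _ Fm]) simp
    also have "\<dots> = Q_law m (haar \<Otimes>\<^sub>M haar)"
      unfolding Qp_eq F_def by (simp add: o_def)
    finally show "distr \<pi> (Q_law m (haar \<Otimes>\<^sub>M haar)) snd = Q_law m (haar \<Otimes>\<^sub>M haar)" .
  qed
  have "(\<integral>\<^sup>+ z. ennreal (dist (fst z) (snd z)) \<partial>\<pi>) = (\<integral>\<^sup>+ w. ennreal (dist (fst (F w)) (snd (F w))) \<partial>OM)"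
    unfolding \<pi>_def by (rule nn_integral_distr[OF Fm]) simp
  also have "\<dots> = (\<integral>\<^sup>+ w. ennreal \<bar>Dw m w\<bar> \<partial>OM)"
    by (rule nn_integral_cong) (simp add: F_def dist_diag_eq Dw_axay)
  also have "\<dots> = ennreal (integral\<^sup>L OM (\<lambda>w. \<bar>Dw m w\<bar>))"
    by (rule nn_integral_eq_integral[OF Dw_abs_int]) simp
  also have "\<dots> \<le> ennreal (1 / sqrt (24 * real m))"
    by (rule ennreal_leI) (rule Dw_upper[OF m])
  finally have le: "(\<integral>\<^sup>+ z. ennreal (dist (fst z) (snd z)) \<partial>\<pi>) \<le> ennreal (1 / sqrt (24 * real m))" .
  show ?thesis unfolding W1_def
    apply (rule order.trans[OF _ le])
    apply (rule INF_lower)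
    by (rule c)
qed

lemma coupling_props:
  assumes "\<pi> \<in> couplings P Q"
  shows "sets \<pi> = sets (P \<Otimes>\<^sub>M Q)" "prob_space \<pi>" "distr \<pi> P fst = P" "distr \<pi> Q snd = Q"
  using assms unfolding couplings_def by auto

lemma coupling_fst_meas: "\<pi> \<in> couplings P Q \<Longrightarrow> fst \<in> measurable \<pi> P"
  using coupling_props(1) measurable_cong_sets measurable_fst by metis

lemma coupling_snd_meas: "\<pi> \<in> couplings P Q \<Longrightarrow> snd \<in> measurable \<pi> Q"
  using coupling_props(1) measurable_cong_sets measurable_snd by metis

lemma diag_set[measurable]: "{x::real \<times> real. fst x = snd x} \<in> sets borel"
proof -
  have "closed {x::real \<times> real. fst x = snd x}"
    by (rule closed_Collect_eq) (intro continuous_intros)+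
  then show ?thesis by (rule borel_closed)
qed

lemma Qd_diag_AE: "AE w in Q_law m diag_meas. fst w = snd w"
proof -
  have "AE w in distr OM borel (\<lambda>w. (ax m w, ax m w)). fst w = snd w"
    by (subst AE_distr_iff) (simp_all add: diag_set)
  then show ?thesis unfolding Qd_eq .
qed

lemma Q_lower_coupling:
  assumes m: "m \<ge> 1" and c: "\<pi> \<in> couplings (Q_law m diag_meas) (Q_law m (haar \<Otimes>\<^sub>M haar))"
  shows "ennreal (1 / (24 * sqrt 2 * real m)) \<le> (\<integral>\<^sup>+ z. ennreal (dist (fst z) (snd z)) \<partial>\<pi>)"
proof -
  let ?Qd = "Q_law m diag_meas" and ?Qp = "Q_law m (haar \<Otimes>\<^sub>M haar)"
  note cp = coupling_props[OF c]
  have fm: "fst \<in> measurable \<pi> ?Qd" by (rule coupling_fst_meas[OF c])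
  have sm: "snd \<in> measurable \<pi> ?Qp" by (rule coupling_snd_meas[OF c])
  have "AE z in distr \<pi> ?Qd fst. fst z = snd z" unfolding cp(3) by (rule Qd_diag_AE)
  then have AE1: "AE z in \<pi>. fst (fst z) = snd (fst z)"
    by (subst (asm) AE_distr_iff[OF fm]) (simp_all add: diag_set)
  define g :: "real \<times> real \<Rightarrow> ennreal" where "g = (\<lambda>w. ennreal (\<bar>fst w - snd w\<bar> / sqrt 2))"
  have gm[measurable]: "g \<in> borel_measurable borel" unfolding g_def borel_prod[symmetric] by measurable
  have "(\<integral>\<^sup>+ z. g (snd z) \<partial>\<pi>) \<le> (\<integral>\<^sup>+ z. ennreal (dist (fst z) (snd z)) \<partial>\<pi>)"
  proof (rule nn_integral_mono_AE)
    show "AE z in \<pi>. g (snd z) \<le> ennreal (dist (fst z) (snd z))"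
      using AE1
    proof eventually_elim
      case (elim z)
      obtain a a' b c where z: "z = ((a, a'), (b, c))" by (metis prod.collapse)
      have "\<bar>b - c\<bar> / sqrt 2 \<le> dist (a, a) (b, c)" by (rule dist_diag_lower)
      then show ?case using elim unfolding g_def z by (simp add: ennreal_leI)
    qed
  qed
  note calc1 = this
  have "(\<integral>\<^sup>+ z. g (snd z) \<partial>\<pi>) = (\<integral>\<^sup>+ w. g w \<partial>distr \<pi> ?Qp snd)"
    by (rule nn_integral_distr[symmetric, OF sm]) simp
  also have "\<dots> = (\<integral>\<^sup>+ w. g w \<partial>?Qp)" unfolding cp(4) ..
  also have "\<dots> = (\<integral>\<^sup>+ w. g w \<partial>distr OM borel (\<lambda>w. (ax m w, ay m w)))" unfolding Qp_eq ..
  also have "\<dots> = (\<integral>\<^sup>+ w. g (ax m w, ay m w) \<partial>OM)"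
    by (rule nn_integral_distr) simp_all
  also have "\<dots> = (\<integral>\<^sup>+ w. ennreal (\<bar>Dw m w\<bar> / sqrt 2) \<partial>OM)"
    unfolding g_def by (simp add: Dw_axay)
  also have "\<dots> = ennreal (integral\<^sup>L OM (\<lambda>w. \<bar>Dw m w\<bar> / sqrt 2))"
    by (rule nn_integral_eq_integral) (simp_all add: Dw_abs_int)
  also have "integral\<^sup>L OM (\<lambda>w. \<bar>Dw m w\<bar> / sqrt 2) = integral\<^sup>L OM (\<lambda>w. \<bar>Dw m w\<bar>) / sqrt 2"
    by simp
  finally have eq: "(\<integral>\<^sup>+ z. g (snd z) \<partial>\<pi>) = ennreal (integral\<^sup>L OM (\<lambda>w. \<bar>Dw m w\<bar>) / sqrt 2)" .
  have "1 / (24 * sqrt 2 * real m) \<le> integral\<^sup>L OM (\<lambda>w. \<bar>Dw m w\<bar>) / sqrt 2"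
  proof -
    have "1 / (24 * sqrt 2 * real m) \<le> (1 / (12 * real m)) / sqrt 2"
      using m by (simp add: field_simps)
    also have "\<dots> \<le> integral\<^sup>L OM (\<lambda>w. \<bar>Dw m w\<bar>) / sqrt 2"
      by (rule divide_right_mono[OF Dw_lower[OF m]]) simp
    finally show ?thesis .
  qed
  then have "ennreal (1 / (24 * sqrt 2 * real m)) \<le> (\<integral>\<^sup>+ z. g (snd z) \<partial>\<pi>)"
    unfolding eq by (rule ennreal_leI)
  then show ?thesis using calc1 by (rule order.trans)
qed

lemma W1_Q_lower:
  assumes m: "m \<ge> 1"
  shows "ennreal (1 / (24 * sqrt 2 * real m)) \<le> W1 dist (Q_law m diag_meas) (Q_law m (haar \<Otimes>\<^sub>M haar))"
  unfolding W1_def by (rule INF_greatest) (rule Q_lower_coupling[OF m])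

lemma doubling_meas[measurable]: "doubling \<in> borel_measurable borel"
  unfolding doubling_def frac_def by (intro borel_measurable_diff borel_measurable_real_floor[THEN measurable_compose[rotated]]) simp_all

lemma doubling_iter_meas[measurable]: "(doubling ^^ a) \<in> borel_measurable borel"
proof (induction a)
  case 0 then show ?case by simp
next
  case (Suc a)
  have "(doubling ^^ Suc a) = doubling \<circ> (doubling ^^ a)" by simp
  then show ?case using measurable_comp[OF Suc doubling_meas] by simp
qed

lemma circ_dist_meas: "(\<lambda>x. circ_dist (f x) (g x)) \<in> borel_measurable M"
  if "f \<in> borel_measurable M" "g \<in> borel_measurable M"
  unfolding circ_dist_nd using that by measurable

lemma dist_array_meas:
  assumes sl: "sets lam = sets (borel :: (real \<times> real) measure)" and pr: "pr \<in> borel_measurable (borel :: (real \<times> real) measure)"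
  shows "(\<lambda>z. dist_array 2 m pr z) \<in> measurable (PiM {1..2} (\<lambda>_. lam)) (PiM (arr_idx 2 m) (\<lambda>_. borel))"
  unfolding dist_array_def
proof (rule measurable_restrict)
  fix \<iota> assume "\<iota> \<in> arr_idx 2 m"
  then obtain i j a b where \<iota>: "\<iota> = (i, j, a, b)" and ij: "i \<in> {1..2}" "j \<in> {1..2}"
    unfolding arr_idx_def by auto
  have ci: "(\<lambda>z. z k) \<in> measurable (PiM {1..2} (\<lambda>_. lam)) borel" if "k \<in> {1..2}" for k :: nat
    by (subst measurable_cong_sets[OF refl sl[symmetric]]) (rule measurable_component_singleton[OF that])
  have "(\<lambda>z. (doubling ^^ a) (pr (z i))) \<in> borel_measurable (PiM {1..2} (\<lambda>_. lam))"
    by (intro measurable_compose[OF _ doubling_iter_meas] measurable_compose[OF ci[OF ij(1)] pr])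
  moreover have "(\<lambda>z. (doubling ^^ b) (pr (z j))) \<in> borel_measurable (PiM {1..2} (\<lambda>_. lam))"
    by (intro measurable_compose[OF _ doubling_iter_meas] measurable_compose[OF ci[OF ij(2)] pr])
  ultimately show "(\<lambda>z. case \<iota> of (i, j, a, b) \<Rightarrow> circ_dist ((doubling ^^ a) (pr (z i))) ((doubling ^^ b) (pr (z j))))
      \<in> borel_measurable (PiM {1..2} (\<lambda>_. lam))"
    unfolding \<iota> by (simp add: circ_dist_meas)
qed

lemma Psi_meas:
  assumes sl: "sets lam = sets (borel :: (real \<times> real) measure)"
  shows "(\<lambda>z. (dist_array 2 m fst z, dist_array 2 m snd z)) \<in> measurable (PiM {1..2} (\<lambda>_. lam))
     (PiM (arr_idx 2 m) (\<lambda>_. borel) \<Otimes>\<^sub>M PiM (arr_idx 2 m) (\<lambda>_. borel))"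
  by (intro measurable_Pair dist_array_meas[OF sl]) (simp_all add: borel_prod[symmetric])

lemma PiM_two:
  assumes M: "prob_space M" and f: "f \<in> borel_measurable (M \<Otimes>\<^sub>M M)"
  shows "(\<integral>\<^sup>+ z. f (z 1, z 2) \<partial>PiM {1..2::nat} (\<lambda>_. M)) = (\<integral>\<^sup>+ w. f w \<partial>(M \<Otimes>\<^sub>M M))"
proof -
  interpret product_sigma_finite "\<lambda>_::nat. M"
    unfolding product_sigma_finite_def using M by (simp add: prob_space_imp_sigma_finite)
  interpret pair_sigma_finite M M
    using M by (simp add: pair_sigma_finite_def prob_space_imp_sigma_finite)
  have I: "{1..2::nat} = insert 1 {2}" by auto
  have fm: "(\<lambda>z. f (z 1, z 2)) \<in> borel_measurable (PiM (insert 1 {2}) (\<lambda>_::nat. M))"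
    using f by measurable
  have "(\<integral>\<^sup>+ z. f (z 1, z 2) \<partial>PiM {1..2::nat} (\<lambda>_. M))
      = (\<integral>\<^sup>+ x. (\<integral>\<^sup>+ y. f ((x(1 := y)) 1, (x(1 := y)) 2) \<partial>M) \<partial>PiM {2::nat} (\<lambda>_. M))"
    unfolding I by (rule product_nn_integral_insert[OF _ _ fm]) simp_all
  also have "\<dots> = (\<integral>\<^sup>+ x. (\<lambda>v. \<integral>\<^sup>+ y. f (y, v) \<partial>M) (x 2) \<partial>PiM {2::nat} (\<lambda>_. M))"
    by simp
  also have "\<dots> = (\<integral>\<^sup>+ v. (\<integral>\<^sup>+ y. f (y, v) \<partial>M) \<partial>M)"
    by (rule product_nn_integral_singleton) (use f in measurable)
  also have "\<dots> = (\<integral>\<^sup>+ w. f w \<partial>(M \<Otimes>\<^sub>M M))"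
    by (rule nn_integral_snd[OF f])
  finally show ?thesis .
qed

definition gA :: "nat \<Rightarrow> array \<Rightarrow> real" where
  "gA m D = (1 / real m) * (\<Sum>t<m. D (1, 2, t, t))"

lemma emb_in: "t < m \<Longrightarrow> (1, 2, t, t) \<in> arr_idx 2 m"
  unfolding arr_idx_def by auto

lemma gA_meas[measurable]: "gA m \<in> borel_measurable (PiM (arr_idx 2 m) (\<lambda>_. borel))"
  unfolding gA_def
  by (intro borel_measurable_times borel_measurable_const borel_measurable_sum measurable_component_singleton emb_in) simp

lemma gA_dist_array: "gA m (dist_array 2 m pr z) = avg_dist m (pr (z 1)) (pr (z 2))"
  unfolding gA_def avg_dist_def dist_array_def
  by (intro arg_cong2[where f="(*)"] refl sum.cong) (auto simp: arr_idx_def)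

lemma arr_finite: "finite (arr_idx n m)"
  unfolding arr_idx_def by simp

lemma metric_lower:
  assumes m: "m \<ge> 1"
  shows "sqrt (real m) * dist (gA m (fst P), gA m (snd P)) (gA m (fst R), gA m (snd R)) \<le> array_metric 2 m P R"
proof -
  define u where "u t = fst P (1, 2, t, t) - fst R (1, 2, t, t)" for t
  define v where "v t = snd P (1, 2, t, t) - snd R (1, 2, t, t)" for t
  define F where "F \<iota> = (fst P \<iota> - fst R \<iota>)\<^sup>2 + (snd P \<iota> - snd R \<iota>)\<^sup>2" for \<iota>
  have m0: "real m > 0" using m by simp
  have gu: "gA m (fst P) - gA m (fst R) = (\<Sum>t<m. u t) / real m"
    unfolding gA_def u_def by (simp add: sum_subtractf diff_divide_distrib)
  have gv: "gA m (snd P) - gA m (snd R) = (\<Sum>t<m. v t) / real m"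
    unfolding gA_def v_def by (simp add: sum_subtractf diff_divide_distrib)
  have cu: "(\<Sum>t<m. u t)\<^sup>2 \<le> (\<Sum>t<m. (u t)\<^sup>2) * real m"
    using sum_squared_le_sum_of_squares[of u "{..<m}"] by simp
  have cv: "(\<Sum>t<m. v t)\<^sup>2 \<le> (\<Sum>t<m. (v t)\<^sup>2) * real m"
    using sum_squared_le_sum_of_squares[of v "{..<m}"] by simp
  have d2: "(dist (gA m (fst P), gA m (snd P)) (gA m (fst R), gA m (snd R)))\<^sup>2
      = ((\<Sum>t<m. u t) / real m)\<^sup>2 + ((\<Sum>t<m. v t) / real m)\<^sup>2"
    by (simp add: dist_Pair_Pair dist_real_def gu gv power_divide)
  have "real m * (((\<Sum>t<m. u t) / real m)\<^sup>2 + ((\<Sum>t<m. v t) / real m)\<^sup>2)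
      = ((\<Sum>t<m. u t)\<^sup>2 + (\<Sum>t<m. v t)\<^sup>2) / real m"
    using m0 by (simp add: power2_eq_square field_simps)
  also have "\<dots> \<le> (\<Sum>t<m. (u t)\<^sup>2) + (\<Sum>t<m. (v t)\<^sup>2)"
    using cu cv m0 by (simp add: divide_le_eq algebra_simps)
  also have "\<dots> = (\<Sum>t<m. F (1, 2, t, t))"
    unfolding F_def u_def v_def by (simp add: sum.distrib)
  also have "\<dots> = (\<Sum>\<iota>\<in>(\<lambda>t. (1::nat, 2::nat, t, t)) ` {..<m}. F \<iota>)"
    by (rule sum.reindex[symmetric, unfolded o_def]) (auto simp: inj_on_def)
  also have "\<dots> \<le> (\<Sum>\<iota>\<in>arr_idx 2 m. F \<iota>)"
    by (rule sum_mono2[OF arr_finite]) (auto simp: arr_idx_def F_def)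
  finally have le: "real m * (dist (gA m (fst P), gA m (snd P)) (gA m (fst R), gA m (snd R)))\<^sup>2 \<le> (\<Sum>\<iota>\<in>arr_idx 2 m. F \<iota>)"
    unfolding d2 .
  have "sqrt (real m) * dist (gA m (fst P), gA m (snd P)) (gA m (fst R), gA m (snd R))
      = sqrt (real m * (dist (gA m (fst P), gA m (snd P)) (gA m (fst R), gA m (snd R)))\<^sup>2)"
    by (simp add: real_sqrt_mult)
  also have "\<dots> \<le> sqrt (\<Sum>\<iota>\<in>arr_idx 2 m. F \<iota>)" by (rule real_sqrt_le_mono[OF le])
  also have "\<dots> = array_metric 2 m P R" unfolding array_metric_def F_def ..
  finally show ?thesis .
qed

lemma sets_HH: "sets HH = sets (borel :: (real \<times> real) measure)"
proof -
  have "sets HH = sets (borel \<Otimes>\<^sub>M (borel :: real measure))" by (rule sets_pair_measure_cong) simp_all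
  also have "(borel \<Otimes>\<^sub>M (borel :: real measure)) = (borel :: (real \<times> real) measure)" by (rule borel_prod)
  finally show ?thesis .
qed

lemma diag_AE: "AE x in diag_meas. fst x = snd x"
  unfolding diag_meas_def by (subst AE_distr_iff) (simp_all add: diag_set)

lemma diagPi_AE: "AE z in PiM {1..2::nat} (\<lambda>_. diag_meas). fst (z 1) = snd (z 1) \<and> fst (z 2) = snd (z 2)"
proof -
  have "AE z in PiM {1..2::nat} (\<lambda>_. diag_meas). fst (z 1) = snd (z 1)"
    by (rule AE_PiM_component[where P="\<lambda>x. fst x = snd x"]) (simp_all add: diag_prob diag_AE)
  moreover have "AE z in PiM {1..2::nat} (\<lambda>_. diag_meas). fst (z 2) = snd (z 2)"
    by (rule AE_PiM_component[where P="\<lambda>x. fst x = snd x"]) (simp_all add: diag_prob diag_AE)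
  ultimately show ?thesis by eventually_elim simp
qed

lemma gA_eq_set: "{x \<in> space (PiM (arr_idx 2 m) (\<lambda>_. borel) \<Otimes>\<^sub>M PiM (arr_idx 2 m) (\<lambda>_. borel)). gA m (fst x) = gA m (snd x)}
   \<in> sets (PiM (arr_idx 2 m) (\<lambda>_. borel) \<Otimes>\<^sub>M PiM (arr_idx 2 m) (\<lambda>_. (borel :: real measure)))"
  by measurable

lemma Phi_diag_AE: "AE P in Phi 2 m diag_meas. gA m (fst P) = gA m (snd P)"
  unfolding Phi_def
  apply (subst AE_distr_iff[OF Psi_meas[OF sets_diag] gA_eq_set])
  using diagPi_AE by eventually_elim (simp add: gA_dist_array)

lemma sets_Phi: "sets (Phi 2 m lam) = sets (PiM (arr_idx 2 m) (\<lambda>_. borel) \<Otimes>\<^sub>M PiM (arr_idx 2 m) (\<lambda>_. (borel :: real measure)))"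
  unfolding Phi_def by simp

lemma Phi_lower_coupling:
  assumes m: "m \<ge> 1" and c: "\<pi> \<in> couplings (Phi 2 m diag_meas) (Phi 2 m (haar \<Otimes>\<^sub>M haar))"
  shows "ennreal (1 / (24 * sqrt (2 * real m))) \<le> (\<integral>\<^sup>+ z. ennreal (array_metric 2 m (fst z) (snd z)) \<partial>\<pi>)"
proof -
  let ?Pd = "Phi 2 m diag_meas" and ?Pp = "Phi 2 m (haar \<Otimes>\<^sub>M haar)"
  let ?AR = "PiM (arr_idx 2 m) (\<lambda>_. (borel :: real measure))"
  note cp = coupling_props[OF c]
  have fm: "fst \<in> measurable \<pi> ?Pd" by (rule coupling_fst_meas[OF c])
  have sm: "snd \<in> measurable \<pi> ?Pp" by (rule coupling_snd_meas[OF c])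
  have "AE z in distr \<pi> ?Pd fst. gA m (fst z) = gA m (snd z)" unfolding cp(3) by (rule Phi_diag_AE)
  then have AE1: "AE z in \<pi>. gA m (fst (fst z)) = gA m (snd (fst z))"
    by (subst (asm) AE_distr_iff[OF fm]) (simp_all add: sets_Phi sets_eq_imp_space_eq[OF sets_Phi] gA_eq_set)
  define h :: "array \<times> array \<Rightarrow> ennreal" where
    "h = (\<lambda>R. ennreal (sqrt (real m) * \<bar>gA m (fst R) - gA m (snd R)\<bar> / sqrt 2))"
  have hm[measurable]: "h \<in> borel_measurable (?AR \<Otimes>\<^sub>M ?AR)" unfolding h_def by measurable
  have hm': "h \<in> borel_measurable ?Pp"
    by (subst measurable_cong_sets[OF sets_Phi refl]) (rule hm)
  have le1: "(\<integral>\<^sup>+ z. h (snd z) \<partial>\<pi>) \<le> (\<integral>\<^sup>+ z. ennreal (array_metric 2 m (fst z) (snd z)) \<partial>\<pi>)"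
  proof (rule nn_integral_mono_AE)
    show "AE z in \<pi>. h (snd z) \<le> ennreal (array_metric 2 m (fst z) (snd z))"
      using AE1
    proof eventually_elim
      case (elim z)
      define a where "a = gA m (fst (fst z))"
      define b where "b = gA m (fst (snd z))"
      define cc where "cc = gA m (snd (snd z))"
      have "\<bar>b - cc\<bar> / sqrt 2 \<le> dist (a, a) (b, cc)" by (rule dist_diag_lower)
      then have "sqrt (real m) * (\<bar>b - cc\<bar> / sqrt 2) \<le> sqrt (real m) * dist (a, a) (b, cc)"
        by (rule mult_left_mono) simp
      also have "\<dots> \<le> array_metric 2 m (fst z) (snd z)"
        using metric_lower[OF m, of "fst z" "snd z"] elim unfolding a_def b_def cc_def by simp
      finally show ?case unfolding h_def b_def cc_def by (intro ennreal_leI) simp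
    qed
  qed
  have "(\<integral>\<^sup>+ z. h (snd z) \<partial>\<pi>) = (\<integral>\<^sup>+ w. h w \<partial>distr \<pi> ?Pp snd)"
    by (rule nn_integral_distr[symmetric, OF sm]) (simp add: hm')
  also have "\<dots> = (\<integral>\<^sup>+ w. h w \<partial>?Pp)" unfolding cp(4) ..
  also have "\<dots> = (\<integral>\<^sup>+ z. h (dist_array 2 m fst z, dist_array 2 m snd z) \<partial>PiM {1..2} (\<lambda>_. HH))"
    unfolding Phi_def by (rule nn_integral_distr[OF Psi_meas[OF sets_HH]]) simp
  also have "\<dots> = (\<integral>\<^sup>+ z. (\<lambda>w. ennreal (sqrt (real m) * \<bar>Dw m w\<bar> / sqrt 2)) (z 1, z 2) \<partial>PiM {1..2::nat} (\<lambda>_. HH))"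
    by (rule nn_integral_cong) (simp add: h_def gA_dist_array Dw_def avg_eq)
  also have "\<dots> = (\<integral>\<^sup>+ w. ennreal (sqrt (real m) * \<bar>Dw m w\<bar> / sqrt 2) \<partial>OM)"
    by (rule PiM_two[OF prob_HH]) measurable
  also have "\<dots> = ennreal (integral\<^sup>L OM (\<lambda>w. sqrt (real m) * \<bar>Dw m w\<bar> / sqrt 2))"
    by (rule nn_integral_eq_integral) (simp_all add: Dw_abs_int)
  also have "integral\<^sup>L OM (\<lambda>w. sqrt (real m) * \<bar>Dw m w\<bar> / sqrt 2) = sqrt (real m) / sqrt 2 * integral\<^sup>L OM (\<lambda>w. \<bar>Dw m w\<bar>)"
    by simp
  finally have eq: "(\<integral>\<^sup>+ z. h (snd z) \<partial>\<pi>) = ennreal (sqrt (real m) / sqrt 2 * integral\<^sup>L OM (\<lambda>w. \<bar>Dw m w\<bar>))" .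
  have "1 / (24 * sqrt (2 * real m)) \<le> sqrt (real m) / sqrt 2 * integral\<^sup>L OM (\<lambda>w. \<bar>Dw m w\<bar>)"
  proof -
    define s where "s = sqrt (real m)"
    have s0: "s > 0" unfolding s_def using m by simp
    have ms: "real m = s * s" unfolding s_def using m by simp
    have s2: "sqrt (2 * real m) = sqrt 2 * s" unfolding s_def by (simp add: real_sqrt_mult)
    have "1 / (24 * sqrt (2 * real m)) \<le> s / sqrt 2 * (1 / (12 * real m))"
      unfolding s2 unfolding ms using s0 by (simp add: field_simps)
    also have "\<dots> \<le> s / sqrt 2 * integral\<^sup>L OM (\<lambda>w. \<bar>Dw m w\<bar>)"
      by (rule mult_left_mono[OF Dw_lower[OF m]]) (use s0 in simp)
    finally show ?thesis unfolding s_def .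
  qed
  then have "ennreal (1 / (24 * sqrt (2 * real m))) \<le> (\<integral>\<^sup>+ z. h (snd z) \<partial>\<pi>)"
    unfolding eq by (rule ennreal_leI)
  then show ?thesis using le1 by (rule order.trans)
qed

lemma W1_Phi_lower:
  assumes m: "m \<ge> 1"
  shows "ennreal (1 / (24 * sqrt (2 * real m))) \<le> W1 (array_metric 2 m) (Phi 2 m diag_meas) (Phi 2 m (haar \<Otimes>\<^sub>M haar))"
  unfolding W1_def by (rule INF_greatest) (rule Phi_lower_coupling[OF m])

theorem proposition19:
  fixes m :: nat
  assumes "m \<ge> 1"
  shows "ennreal (1 / (24 * sqrt 2 * real m))
           \<le> W1 dist (Q_law m diag_meas) (Q_law m (haar \<Otimes>\<^sub>M haar))
       \<and> W1 dist (Q_law m diag_meas) (Q_law m (haar \<Otimes>\<^sub>M haar))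
           \<le> ennreal (1 / sqrt (24 * real m))
       \<and> ennreal (1 / (24 * sqrt (2 * real m)))
           \<le> W1 (array_metric 2 m) (Phi 2 m diag_meas) (Phi 2 m (haar \<Otimes>\<^sub>M haar))"
  using W1_Q_lower[OF assms] W1_Q_upper[OF assms] W1_Phi_lower[OF assms] by blast

end
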